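(* Let $q \geq 5$ be a prime power and let $\mathcal{X}$ be a plane curve of degree $q-1$ defined over $\mathbb{F}_q$ without $\mathbb{F}_q$-linear components with $\mathrm{N}_q(\mathcal{X}) = (q-1)^2$. Then the set $\mathcal{X}(\mathbb{F}_q) \subseteq \mathbb{P}^2(\mathbb{F}_q)$ is a $((q-1)^2, q-1)$-arc.
   Context: $\mathcal{X}(\mathbb{F}_q) = \mathcal{X} \cap \mathbb{P}^2(\mathbb{F}_q)$ and $\mathrm{N}_q(\mathcal{X}) = \#\mathcal{X}(\mathbb{F}_q)$. "Without $\mathbb{F}_q$-linear components" means no line defined over $\mathbb{F}_q$ is a component. A $(k,n)$-arc in $\mathbb{P}^2(\mathbb{F}_q)$ is a set of $k$ points such that every line of $\mathbb{P}^2(\mathbb{F}_q)$ contains at most $n$ of its points and some line contains exactly $n$ of its points. *)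

theory Defs
  imports Main "HOL-Library.Cardinality"
begin

text \<open>Ternary forms over a field: coefficient functions on exponent triples (i,j,k),
  standing for the monomial x^i y^j z^k.\<close>

type_synonym 'a form3 = "nat \<times> nat \<times> nat \<Rightarrow> 'a"

definition homog :: "nat \<Rightarrow> ('a::zero) form3 \<Rightarrow> bool" where
  "homog d F \<longleftrightarrow> (\<forall>i j k. F (i,j,k) \<noteq> 0 \<longrightarrow> i + j + k = d)"

definition pmul :: "('a::comm_ring_1) form3 \<Rightarrow> 'a form3 \<Rightarrow> 'a form3" where
  "pmul F G = (\<lambda>(i,j,k). \<Sum>(a,b,c)\<in>{0..i}\<times>{0..j}\<times>{0..k}.
                 F (a,b,c) * G (i-a, j-b, k-c))"

definition lin_form :: "'a::zero \<times> 'a \<times> 'a \<Rightarrow> 'a form3" where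
  "lin_form l = (\<lambda>m. if m = (1,0,0) then fst l else if m = (0,1,0) then fst (snd l)
                     else if m = (0,0,1) then snd (snd l) else 0)"

definition eval_form :: "nat \<Rightarrow> ('a::comm_ring_1) form3 \<Rightarrow> 'a \<times> 'a \<times> 'a \<Rightarrow> 'a" where
  "eval_form d F v = (\<Sum>(i,j)\<in>{(i,j). i + j \<le> d}.
      F (i, j, d - i - j) * fst v ^ i * fst (snd v) ^ j * snd (snd v) ^ (d - i - j))"

definition plane_curve :: "nat \<Rightarrow> ('a::field) form3 \<Rightarrow> bool" where
  "plane_curve d F \<longleftrightarrow> homog d F \<and> F \<noteq> (\<lambda>_. 0)"

definition has_linear_component :: "nat \<Rightarrow> ('a::field) form3 \<Rightarrow> bool" where
  "has_linear_component d F \<longleftrightarrow>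
     (\<exists>l G. l \<noteq> (0,0,0) \<and> homog (d - 1) G \<and> F = pmul (lin_form l) G)"

definition proj_pt :: "'a::field \<times> 'a \<times> 'a \<Rightarrow> ('a \<times> 'a \<times> 'a) set" where
  "proj_pt v = {(c * fst v, c * fst (snd v), c * snd (snd v)) | c. c \<noteq> 0}"

definition P2 :: "('a::field \<times> 'a \<times> 'a) set set" where
  "P2 = {proj_pt v | v. v \<noteq> (0,0,0)}"

definition line_pts :: "'a::field \<times> 'a \<times> 'a \<Rightarrow> ('a \<times> 'a \<times> 'a) set set" where
  "line_pts l = {proj_pt v | v. v \<noteq> (0,0,0) \<and>
      fst l * fst v + fst (snd l) * fst (snd v) + snd (snd l) * snd (snd v) = 0}"

definition lines_P2 :: "('a::field \<times> 'a \<times> 'a) set set set" where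
  "lines_P2 = {line_pts l | l. l \<noteq> (0,0,0)}"

definition rat_points :: "nat \<Rightarrow> ('a::field) form3 \<Rightarrow> ('a \<times> 'a \<times> 'a) set set" where
  "rat_points d F = {proj_pt v | v. v \<noteq> (0,0,0) \<and> eval_form d F v = 0}"

definition is_arc :: "nat \<Rightarrow> nat \<Rightarrow> ('a::field \<times> 'a \<times> 'a) set set \<Rightarrow> bool" where
  "is_arc k n S \<longleftrightarrow> S \<subseteq> P2 \<and> finite S \<and> card S = k \<and>
     (\<forall>L\<in>lines_P2. card (L \<inter> S) \<le> n) \<and> (\<exists>L\<in>lines_P2. card (L \<inter> S) = n)"

end

theory Submission imports Defs "HOL-Computational_Algebra.Polynomial"
begin

definition dot :: "('a::comm_ring_1) \<times> 'a \<times> 'a \<Rightarrow> 'a \<times> 'a \<times> 'a \<Rightarrow> 'a" where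
  "dot l v = fst l * fst v + fst (snd l) * fst (snd v) + snd (snd l) * snd (snd v)"

definition smul :: "('a::comm_ring_1) \<Rightarrow> 'a \<times> 'a \<times> 'a \<Rightarrow> 'a \<times> 'a \<times> 'a" where
  "smul c v = (c * fst v, c * fst (snd v), c * snd (snd v))"

definition mono :: "nat \<times> nat \<times> nat \<Rightarrow> ('a::comm_ring_1) \<times> 'a \<times> 'a \<Rightarrow> 'a" where
  "mono m v = fst v ^ fst m * fst (snd v) ^ fst (snd m) * snd (snd v) ^ snd (snd m)"

definition T :: "nat \<Rightarrow> (nat \<times> nat \<times> nat) set" where
  "T d = {(i,j,k). i + j + k = d}"

lemma finite_T: "finite (T d)"
proof -
  have "T d \<subseteq> {0..d} \<times> {0..d} \<times> {0..d}" by (auto simp: T_def)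
  thus ?thesis by (rule finite_subset) auto
qed

lemma eval_T: "eval_form d F v = (\<Sum>m\<in>T d. F m * mono m v)"
  unfolding eval_form_def
  by (rule sum.reindex_bij_witness[where i = "\<lambda>(i,j,k). (i,j)" and j = "\<lambda>(i,j). (i,j,d-i-j)"])
     (auto simp: T_def mono_def)

lemma pmul_lin: "pmul (lin_form (a,b,c)) G (i,j,k) =
   (if i > 0 then a * G (i-1,j,k) else 0) + (if j > 0 then b * G (i,j-1,k) else 0)
   + (if k > 0 then c * G (i,j,k-1) else 0)" (is "_ = ?R")
proof -
  let ?B = "{0..i}\<times>{0..j}\<times>{0..k}"
  have e: "\<And>m. lin_form (a,b,c) m * G (i - fst m, j - fst (snd m), k - snd (snd m)) =
     (if m = (1,0,0) then a * G (i-1,j,k) else 0) + (if m = (0,1,0) then b * G (i,j-1,k) else 0)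
     + (if m = (0,0,1) then c * G (i,j,k-1) else 0)"
    by (auto simp: lin_form_def)
  have "pmul (lin_form (a,b,c)) G (i,j,k) = (\<Sum>m\<in>?B. lin_form (a,b,c) m * G (i - fst m, j - fst (snd m), k - snd (snd m)))"
    unfolding pmul_def by (auto intro!: sum.cong)
  also have "\<dots> = (\<Sum>m\<in>?B. (if m = (1,0,0) then a * G (i-1,j,k) else 0))
     + (\<Sum>m\<in>?B. (if m = (0,1,0) then b * G (i,j-1,k) else 0))
     + (\<Sum>m\<in>?B. (if m = (0,0,1) then c * G (i,j,k-1) else 0))"
    unfolding e sum.distrib ..
  also have "\<dots> = ?R" by (simp add: sum.delta)
  finally show ?thesis .
qed

lemma eval_add: "eval_form d (\<lambda>m. P m + R m) v = eval_form d P v + eval_form d R v"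
  unfolding eval_T by (simp add: sum.distrib distrib_right)

lemma pow_pred: "0 < n \<Longrightarrow> (x::'a::monoid_mult) ^ n = x * x ^ (n - 1)"
  by (cases n) auto

lemma shift1: "(\<Sum>m\<in>T (Suc e). (if fst m > 0 then a * G (fst m - 1, fst (snd m), snd (snd m)) else 0) * mono m v)
   = a * fst v * (\<Sum>m\<in>T e. G m * mono m v)"
proof -
  have "(\<Sum>m\<in>T (Suc e). (if fst m > 0 then a * G (fst m - 1, fst (snd m), snd (snd m)) else 0) * mono m v)
     = (\<Sum>m\<in>{m\<in>T (Suc e). fst m > 0}. a * G (fst m - 1, fst (snd m), snd (snd m)) * mono m v)"
    by (auto simp: sum.inter_filter finite_T intro!: sum.cong)
  also have "\<dots> = (\<Sum>m\<in>T e. a * fst v * (G m * mono m v))"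
    by (rule sum.reindex_bij_witness[where i = "\<lambda>(i,j,k). (i+1,j,k)" and j = "\<lambda>(i,j,k). (i-1,j,k)"])
       (auto simp: T_def mono_def pow_pred mult_ac)
  finally show ?thesis by (simp add: sum_distrib_left)
qed

lemma shift2: "(\<Sum>m\<in>T (Suc e). (if fst (snd m) > 0 then b * G (fst m, fst (snd m) - 1, snd (snd m)) else 0) * mono m v)
   = b * fst (snd v) * (\<Sum>m\<in>T e. G m * mono m v)"
proof -
  have "(\<Sum>m\<in>T (Suc e). (if fst (snd m) > 0 then b * G (fst m, fst (snd m) - 1, snd (snd m)) else 0) * mono m v)
     = (\<Sum>m\<in>{m\<in>T (Suc e). fst (snd m) > 0}. b * G (fst m, fst (snd m) - 1, snd (snd m)) * mono m v)"
    by (auto simp: sum.inter_filter finite_T intro!: sum.cong)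
  also have "\<dots> = (\<Sum>m\<in>T e. b * fst (snd v) * (G m * mono m v))"
    by (rule sum.reindex_bij_witness[where i = "\<lambda>(i,j,k). (i,j+1,k)" and j = "\<lambda>(i,j,k). (i,j-1,k)"])
       (auto simp: T_def mono_def pow_pred mult_ac)
  finally show ?thesis by (simp add: sum_distrib_left)
qed

lemma shift3: "(\<Sum>m\<in>T (Suc e). (if snd (snd m) > 0 then c * G (fst m, fst (snd m), snd (snd m) - 1) else 0) * mono m v)
   = c * snd (snd v) * (\<Sum>m\<in>T e. G m * mono m v)"
proof -
  have "(\<Sum>m\<in>T (Suc e). (if snd (snd m) > 0 then c * G (fst m, fst (snd m), snd (snd m) - 1) else 0) * mono m v)
     = (\<Sum>m\<in>{m\<in>T (Suc e). snd (snd m) > 0}. c * G (fst m, fst (snd m), snd (snd m) - 1) * mono m v)"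
    by (auto simp: sum.inter_filter finite_T intro!: sum.cong)
  also have "\<dots> = (\<Sum>m\<in>T e. c * snd (snd v) * (G m * mono m v))"
    by (rule sum.reindex_bij_witness[where i = "\<lambda>(i,j,k). (i,j,k+1)" and j = "\<lambda>(i,j,k). (i,j,k-1)"])
       (auto simp: T_def mono_def pow_pred mult_ac)
  finally show ?thesis by (simp add: sum_distrib_left)
qed

lemma eval_pmul: "eval_form (Suc e) (pmul (lin_form (a,b,c)) G) v = dot (a,b,c) v * eval_form e G v"
proof -
  have "eval_form (Suc e) (pmul (lin_form (a,b,c)) G) v =
    (\<Sum>m\<in>T (Suc e). (if fst m > 0 then a * G (fst m - 1, fst (snd m), snd (snd m)) else 0) * mono m v)
  + (\<Sum>m\<in>T (Suc e). (if fst (snd m) > 0 then b * G (fst m, fst (snd m) - 1, snd (snd m)) else 0) * mono m v)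
  + (\<Sum>m\<in>T (Suc e). (if snd (snd m) > 0 then c * G (fst m, fst (snd m), snd (snd m) - 1) else 0) * mono m v)"
    unfolding eval_T sum.distrib[symmetric]
    by (rule sum.cong) (auto simp: pmul_lin distrib_right)
  also have "\<dots> = dot (a,b,c) v * eval_form e G v"
    unfolding shift1 shift2 shift3 eval_T dot_def by (simp add: algebra_simps)
  finally show ?thesis .
qed

lemma binary:
  fixes r :: "nat \<Rightarrow> 'a::field" and A :: "('a \<times> 'a \<times> 'a) set"
  assumes fin: "finite A" and cardA: "d < card A"
    and nz: "\<forall>v\<in>A. (fst v, fst (snd v)) \<noteq> (0,0)"
    and van: "\<forall>v\<in>A. (\<Sum>i\<le>d. r i * fst v ^ i * fst (snd v) ^ (d-i)) = 0"
    and inj: "\<forall>v\<in>A. \<forall>w\<in>A. fst v * fst (snd w) = fst w * fst (snd v) \<longrightarrow> v = w"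
  shows "\<forall>i\<le>d. r i = 0"
proof -
  define p where "p = (\<Sum>i\<le>d. monom (r i) i)"
  have cp: "coeff p i = (if i \<le> d then r i else 0)" for i
    unfolding p_def coeff_sum coeff_monom by (auto simp: sum.delta)
  have pp: "poly p t = (\<Sum>i\<le>d. r i * t ^ i)" for t
    unfolding p_def poly_sum poly_monom ..
  define A1 where "A1 = {v\<in>A. fst (snd v) \<noteq> 0}"
  define A0 where "A0 = {v\<in>A. fst (snd v) = 0}"
  have finA0: "finite A0" and finA1: "finite A1" using fin by (auto simp: A0_def A1_def)
  have cardsplit: "card A = card A0 + card A1"
  proof -
    have "A = A0 \<union> A1" "A0 \<inter> A1 = {}" by (auto simp: A0_def A1_def)
    thus ?thesis using finA0 finA1 card_Un_disjoint by metis
  qed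
  have A0le: "card A0 \<le> 1"
    using finA0 inj by (auto simp: card_le_Suc0_iff_eq A0_def)
  have root: "poly p (fst v / fst (snd v)) = 0" if "v \<in> A1" for v
  proof -
    let ?x = "fst v" and ?y = "fst (snd v)"
    have y: "?y \<noteq> 0" using that by (auto simp: A1_def)
    have "?y ^ d * poly p (?x / ?y) = (\<Sum>i\<le>d. r i * ?x ^ i * ?y ^ (d-i))"
      unfolding pp sum_distrib_left
    proof (rule sum.cong)
      fix i assume "i \<in> {..d}"
      hence "?y ^ d = ?y ^ i * ?y ^ (d - i)" by (simp add: power_add[symmetric])
      thus "?y ^ d * (r i * (?x / ?y) ^ i) = r i * ?x ^ i * ?y ^ (d - i)"
        using y by (simp add: power_divide field_simps)
    qed simp
    also have "\<dots> = 0" using van that by (auto simp: A1_def)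
    finally show ?thesis using y by simp
  qed
  have injA1: "inj_on (\<lambda>v. fst v / fst (snd v)) A1"
  proof (rule inj_onI)
    fix v w assume v: "v \<in> A1" and w: "w \<in> A1" and e: "fst v / fst (snd v) = fst w / fst (snd w)"
    hence "fst v * fst (snd w) = fst w * fst (snd v)" by (auto simp: A1_def field_simps)
    thus "v = w" using inj v w by (auto simp: A1_def)
  qed
  have p0: "p = 0"
  proof (rule ccontr)
    assume pn: "p \<noteq> 0"
    have "card A1 = card ((\<lambda>v. fst v / fst (snd v)) ` A1)" using injA1 by (simp add: card_image)
    also have "\<dots> \<le> card {t. poly p t = 0}"
      by (rule card_mono) (use pn poly_roots_finite root in auto)
    also have "\<dots> \<le> degree p" by (rule card_poly_roots_bound[OF pn])
    finally have c1: "card A1 \<le> degree p" .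
    have dp: "degree p \<le> d" by (rule degree_le) (auto simp: cp)
    show False
    proof (cases "A0 = {}")
      case True
      thus False using cardsplit c1 dp cardA by simp
    next
      case False
      then obtain v0 where v0: "v0 \<in> A0" by auto
      have y0: "fst (snd v0) = 0" and x0: "fst v0 \<noteq> 0" and v0A: "v0 \<in> A"
        using v0 nz by (auto simp: A0_def)
      have "(\<Sum>i\<le>d. r i * fst v0 ^ i * fst (snd v0) ^ (d-i)) = r d * fst v0 ^ d"
        unfolding y0 by (rule trans[OF sum.mono_neutral_right[of "{..d}" "{d}"]]) auto
      hence "r d = 0" using van v0A x0 by auto
      show False
      proof (cases d)
        case 0
        hence "p = 0" using \<open>r d = 0\<close> by (auto simp: poly_eq_iff cp)
        thus False using pn by simp
      next
        case (Suc e)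
        have "degree p \<le> e" by (rule degree_le) (use Suc \<open>r d = 0\<close> in \<open>auto simp: cp le_Suc_eq dest: le_antisym\<close>)
        moreover have "card A0 = 1" using A0le False finA0 by (simp add: le_Suc_eq card_0_eq)
        ultimately show False using cardsplit c1 cardA Suc by simp
      qed
    qed
  qed
  show ?thesis
  proof (intro allI impI)
    fix i assume "i \<le> d"
    thus "r i = 0" using cp[of i] p0 by simp
  qed
qed

function Gr :: "'a::field \<Rightarrow> 'a \<Rightarrow> 'a \<Rightarrow> 'a form3 \<Rightarrow> nat \<Rightarrow> nat \<Rightarrow> nat \<Rightarrow> 'a" where
  "Gr a b c F i j m = (F (i,j,Suc m) - (if i > 0 then a * Gr a b c F (i-1) j (Suc m) else 0)
       - (if j > 0 then b * Gr a b c F i (j-1) (Suc m) else 0)) / c"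
  by auto
termination by (relation "measure (\<lambda>(a,b,c,F,i,j,m). i+j)") auto

declare Gr.simps[simp del]

lemma Gr_hom: "homog (Suc e) F \<Longrightarrow> i + j + m \<noteq> e \<Longrightarrow> Gr a b c F i j m = 0"
proof (induction a b c F i j m rule: Gr.induct)
  case (1 a b c F i j m)
  have "F (i,j,Suc m) = 0" using 1(3,4) unfolding homog_def by (metis add_Suc_right old.nat.inject)
  moreover have "i > 0 \<Longrightarrow> Gr a b c F (i-1) j (Suc m) = 0" using 1 by auto
  moreover have "j > 0 \<Longrightarrow> Gr a b c F i (j-1) (Suc m) = 0" using 1 by auto
  ultimately show ?case by (subst Gr.simps) auto
qed

lemma eval_k0:
  assumes "\<And>i j k. k > 0 \<Longrightarrow> R (i,j,k) = 0"
  shows "eval_form d R v = (\<Sum>i\<le>d. R (i, d-i, 0) * fst v ^ i * fst (snd v) ^ (d-i))"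
proof -
  have z: "\<forall>m\<in>T d - {m \<in> T d. snd (snd m) = 0}. R m * mono m v = 0"
  proof
    fix m assume "m \<in> T d - {m \<in> T d. snd (snd m) = 0}"
    then obtain i j k where "m = (i,j,k)" "k > 0" by (cases m) auto
    thus "R m * mono m v = 0" using assms by simp
  qed
  have "eval_form d R v = (\<Sum>m\<in>{m\<in>T d. snd (snd m) = 0}. R m * mono m v)"
    unfolding eval_T by (rule sum.mono_neutral_right) (use z in \<open>auto simp: finite_T\<close>)
  also have "\<dots> = (\<Sum>i\<le>d. R (i, d-i, 0) * fst v ^ i * fst (snd v) ^ (d-i))"
    by (rule sum.reindex_bij_witness[where i = "\<lambda>i. (i, d-i, 0)" and j = "\<lambda>(i,j,k). i"])
       (auto simp: T_def mono_def)
  finally show ?thesis .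
qed

lemma core:
  fixes F :: "('a::field) form3"
  assumes hom: "homog (Suc e) F" and c: "c \<noteq> 0" and fin: "finite A" and cardA: "Suc e < card A"
    and hA: "\<forall>v\<in>A. v \<noteq> (0,0,0) \<and> dot (a,b,c) v = 0 \<and> eval_form (Suc e) F v = 0"
    and np: "\<forall>v\<in>A. \<forall>w\<in>A. \<forall>t. w = smul t v \<longrightarrow> w = v"
  shows "\<exists>G. homog e G \<and> F = pmul (lin_form (a,b,c)) G"
proof -
  define G where "G = (\<lambda>(i,j,m). Gr a b c F i j m)"
  have homG: "homog e G" unfolding homog_def G_def by (metis (mono_tags) Gr_hom[OF hom] case_prod_conv)
  define P where "P = pmul (lin_form (a,b,c)) G"
  have Pk: "P (i,j,k) = F (i,j,k)" if kp: "k > 0" for i j k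
  proof -
    obtain m where m: "k = Suc m" using kp by (cases k) auto
    have "G (i,j,m) = (F (i,j,Suc m) - (if i > 0 then a * G (i-1,j,Suc m) else 0)
       - (if j > 0 then b * G (i,j-1,Suc m) else 0)) / c"
      unfolding G_def by (simp add: Gr.simps[of a b c F i j m])
    thus ?thesis unfolding P_def pmul_lin m using c by (simp add: field_simps)
  qed
  have hG: "\<And>i j k. i+j+k \<noteq> e \<Longrightarrow> G (i,j,k) = 0" using homG unfolding homog_def by blast
  have homP: "P (i,j,k) = 0" if ne: "i + j + k \<noteq> Suc e" for i j k
  proof -
    have 1: "(if i > 0 then a * G (i-1,j,k) else 0) = 0" using hG[of "i-1" j k] ne by auto
    have 2: "(if j > 0 then b * G (i,j-1,k) else 0) = 0" using hG[of i "j-1" k] ne by auto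
    have 3: "(if k > 0 then c * G (i,j,k-1) else 0) = 0" using hG[of i j "k-1"] ne by auto
    show ?thesis unfolding P_def pmul_lin 1 2 3 by simp
  qed
  define R where "R = (\<lambda>m. F m - P m)"
  have FPR: "F = (\<lambda>m. P m + R m)" by (auto simp: R_def)
  have Rk: "R (i,j,k) = 0" if "k > 0" for i j k using Pk[OF that] by (simp add: R_def)
  have Rh: "R (i,j,k) = 0" if "i + j + k \<noteq> Suc e" for i j k
    using homP[OF that] hom that unfolding R_def homog_def by force
  have van: "\<forall>v\<in>A. (\<Sum>i\<le>Suc e. R (i, Suc e - i, 0) * fst v ^ i * fst (snd v) ^ (Suc e - i)) = 0"
  proof
    fix v assume v: "v \<in> A"
    have "0 = eval_form (Suc e) F v" using hA v by auto
    also have "\<dots> = eval_form (Suc e) P v + eval_form (Suc e) R v"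
      by (subst FPR) (rule eval_add)
    also have "eval_form (Suc e) P v = 0" unfolding P_def eval_pmul using hA v by auto
    finally show "(\<Sum>i\<le>Suc e. R (i, Suc e - i, 0) * fst v ^ i * fst (snd v) ^ (Suc e - i)) = 0"
      using eval_k0[of R, OF Rk] by simp
  qed
  have zv: "snd (snd v) = - (a * fst v + b * fst (snd v)) / c" if "v \<in> A" for v
  proof -
    have "a * fst v + b * fst (snd v) + c * snd (snd v) = 0" using hA that by (auto simp: dot_def)
    hence "c * snd (snd v) = - (a * fst v + b * fst (snd v))" by (simp add: eq_neg_iff_add_eq_0 algebra_simps)
    thus ?thesis using c by (simp add: eq_divide_eq mult.commute)
  qed
  have nz: "\<forall>v\<in>A. (fst v, fst (snd v)) \<noteq> (0,0)"
  proof
    fix v assume v: "v \<in> A"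
    show "(fst v, fst (snd v)) \<noteq> (0,0)"
    proof
      assume "(fst v, fst (snd v)) = (0,0)"
      hence "v = (0,0,0)" using zv[OF v] by (cases v) auto
      thus False using hA v by auto
    qed
  qed
  have inj: "\<forall>v\<in>A. \<forall>w\<in>A. fst v * fst (snd w) = fst w * fst (snd v) \<longrightarrow> v = w"
  proof (intro ballI impI)
    fix v w assume v: "v \<in> A" and w: "w \<in> A" and e: "fst v * fst (snd w) = fst w * fst (snd v)"
    obtain x y z where vv: "v = (x,y,z)" by (cases v) auto
    obtain x' y' z' where ww: "w = (x',y',z')" by (cases w) auto
    have z: "z = - (a * x + b * y) / c" using zv[OF v] vv by simp
    have z': "z' = - (a * x' + b * y') / c" using zv[OF w] ww by simp
    have e': "x * y' = x' * y" using e vv ww by simp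
    have "\<exists>t. w = smul t v"
    proof (cases "x = 0")
      case False
      have yy: "y' = (x' / x) * y" using e' False by (simp add: field_simps)
      have zz: "z' = (x' / x) * z" unfolding z z' yy using False c by (simp add: field_simps)
      have "w = smul (x'/x) v" using False unfolding vv ww smul_def
        by (simp add: yy zz)
      thus ?thesis by blast
    next
      case True
      have y: "y \<noteq> 0" using nz v vv True by auto
      have x': "x' = 0" using e' True y by simp
      have zz: "z' = (y' / y) * z" unfolding z z' True x' using y c by (simp add: field_simps)
      have "w = smul (y'/y) v" using y unfolding vv ww smul_def
        by (simp add: zz True x')
      thus ?thesis by blast
    qed
    thus "v = w" using np v w by metis
  qed
  have r0: "\<forall>i\<le>Suc e. R (i, Suc e - i, 0) = 0"
    by (rule binary[OF fin cardA nz van inj])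
  have "R = (\<lambda>_. 0)"
  proof
    fix m show "R m = 0"
    proof (cases m)
      case (fields i j k)
      show ?thesis
      proof (cases "k > 0 \<or> i + j + k \<noteq> Suc e")
        case True thus ?thesis using Rk Rh fields by auto
      next
        case False
        hence "k = 0" "j = Suc e - i" "i \<le> Suc e" by auto
        thus ?thesis using r0 fields by auto
      qed
    qed
  qed
  hence "F = P" using FPR by simp
  thus ?thesis using homG P_def by blast
qed

definition sw23 :: "'b \<times> 'b \<times> 'b \<Rightarrow> 'b \<times> 'b \<times> 'b" where
  "sw23 x = (fst x, snd (snd x), fst (snd x))"
definition sw13 :: "'b \<times> 'b \<times> 'b \<Rightarrow> 'b \<times> 'b \<times> 'b" where
  "sw13 x = (snd (snd x), fst (snd x), fst x)"

lemma sw23_sw23[simp]: "sw23 (sw23 x) = x" by (simp add: sw23_def)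
lemma sw13_sw13[simp]: "sw13 (sw13 x) = x" by (simp add: sw13_def)
lemma sw23_trip[simp]: "sw23 (a,b,c) = (a,c,b)" by (simp add: sw23_def)
lemma sw13_trip[simp]: "sw13 (a,b,c) = (c,b,a)" by (simp add: sw13_def)

lemma homog_sw23: assumes "homog d F" shows "homog d (F \<circ> sw23)"
  unfolding homog_def
proof (intro allI impI)
  fix i j k assume "(F \<circ> sw23) (i,j,k) \<noteq> 0"
  thus "i + j + k = d" using assms[unfolded homog_def, rule_format, of i k j] by (simp add: add_ac)
qed
lemma homog_sw13: assumes "homog d F" shows "homog d (F \<circ> sw13)"
  unfolding homog_def
proof (intro allI impI)
  fix i j k assume "(F \<circ> sw13) (i,j,k) \<noteq> 0"
  thus "i + j + k = d" using assms[unfolded homog_def, rule_format, of k j i] by (simp add: add_ac)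
qed

lemma eval_sw23: "eval_form d (F \<circ> sw23) (sw23 v) = eval_form d F v"
  unfolding eval_T
  by (rule sum.reindex_bij_witness[where i = sw23 and j = sw23])
     (auto simp: T_def mono_def sw23_def mult_ac)
lemma eval_sw13: "eval_form d (F \<circ> sw13) (sw13 v) = eval_form d F v"
  unfolding eval_T
  by (rule sum.reindex_bij_witness[where i = sw13 and j = sw13])
     (auto simp: T_def mono_def sw13_def mult_ac)

lemma dot_sw23: "dot (sw23 l) (sw23 v) = dot l v" by (simp add: dot_def sw23_def algebra_simps)
lemma dot_sw13: "dot (sw13 l) (sw13 v) = dot l v" by (simp add: dot_def sw13_def algebra_simps)
lemma smul_sw23: "sw23 (smul t v) = smul t (sw23 v)" by (simp add: smul_def sw23_def)
lemma smul_sw13: "sw13 (smul t v) = smul t (sw13 v)" by (simp add: smul_def sw13_def)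

lemma pmul_sw23: "pmul (lin_form (a,c,b)) (G \<circ> sw23) = (pmul (lin_form (a,b,c)) G) \<circ> sw23"
proof
  fix m :: "nat \<times> nat \<times> nat"
  obtain i j k where m: "m = (i,j,k)" by (cases m) auto
  show "pmul (lin_form (a,c,b)) (G \<circ> sw23) m = (pmul (lin_form (a,b,c)) G \<circ> sw23) m"
    unfolding m by (simp add: pmul_lin add_ac)
qed
lemma pmul_sw13: "pmul (lin_form (c,b,a)) (G \<circ> sw13) = (pmul (lin_form (a,b,c)) G) \<circ> sw13"
proof
  fix m :: "nat \<times> nat \<times> nat"
  obtain i j k where m: "m = (i,j,k)" by (cases m) auto
  show "pmul (lin_form (c,b,a)) (G \<circ> sw13) m = (pmul (lin_form (a,b,c)) G \<circ> sw13) m"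
    unfolding m by (simp add: pmul_lin add_ac)
qed

lemma gen:
  fixes F :: "('a::field) form3"
  assumes hom: "homog (Suc e) F" and l: "l \<noteq> (0,0,0)" and fin: "finite A" and cardA: "Suc e < card A"
    and hA: "\<forall>v\<in>A. v \<noteq> (0,0,0) \<and> dot l v = 0 \<and> eval_form (Suc e) F v = 0"
    and np: "\<forall>v\<in>A. \<forall>w\<in>A. \<forall>t. w = smul t v \<longrightarrow> w = v"
  shows "\<exists>G. homog e G \<and> F = pmul (lin_form l) G"
proof -
  obtain a b c where lv: "l = (a,b,c)" by (cases l) auto
  show ?thesis
  proof (cases "c \<noteq> 0")
    case True
    thus ?thesis using core[OF hom True fin cardA] hA np lv by simp
  next
    case c0: False
    show ?thesis
    proof (cases "b \<noteq> 0")
      case True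
      have inj: "inj sw23" by (metis injI sw23_sw23)
      have "\<exists>G. homog e G \<and> F \<circ> sw23 = pmul (lin_form (a,c,b)) G"
      proof (rule core[OF homog_sw23[OF hom] True _ _ _ _])
        show "finite (sw23 ` A)" using fin by simp
        show "Suc e < card (sw23 ` A)" using cardA card_image[OF inj_on_subset[OF inj subset_UNIV], of A] by simp
        show "\<forall>v\<in>sw23 ` A. v \<noteq> (0,0,0) \<and> dot (a,c,b) v = 0 \<and> eval_form (Suc e) (F \<circ> sw23) v = 0"
        proof
          fix v assume "v \<in> sw23 ` A"
          then obtain u where u: "u \<in> A" "v = sw23 u" by auto
          have "sw23 u \<noteq> (0,0,0)" using hA u by (metis sw23_sw23 sw23_trip)
          moreover have "dot (sw23 l) (sw23 u) = 0" using hA u dot_sw23 by metis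
          moreover have "eval_form (Suc e) (F \<circ> sw23) (sw23 u) = 0"
            using eval_sw23[of "Suc e" F u] hA u by simp
          ultimately show "v \<noteq> (0,0,0) \<and> dot (a,c,b) v = 0 \<and> eval_form (Suc e) (F \<circ> sw23) v = 0"
            using u hA eval_sw23 lv by simp
        qed
        show "\<forall>v\<in>sw23 ` A. \<forall>w\<in>sw23 ` A. \<forall>t. w = smul t v \<longrightarrow> w = v"
        proof (intro ballI allI impI)
          fix v w t assume v: "v \<in> sw23 ` A" and w: "w \<in> sw23 ` A" and ew: "w = smul t v"
          obtain u where u: "u \<in> A" "v = sw23 u" using v by auto
          obtain u' where u': "u' \<in> A" "w = sw23 u'" using w by auto
          have "u' = smul t u" using ew u u' smul_sw23[of t u] by (metis sw23_sw23)
          hence "u' = u" using np u u' by blast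
          thus "w = v" using u u' by simp
        qed
      qed
      then obtain G' where G': "homog e G'" "F \<circ> sw23 = pmul (lin_form (a,c,b)) G'" by blast
      have "F = (F \<circ> sw23) \<circ> sw23" by (simp add: comp_def)
      also have "\<dots> = pmul (lin_form (a,b,c)) (G' \<circ> sw23)"
        using G'(2) pmul_sw23[of a b c G'] by simp
      finally show ?thesis using homog_sw23[OF G'(1)] lv by blast
    next
      case False
      hence a: "a \<noteq> 0" using l lv c0 by auto
      have inj: "inj sw13" by (metis injI sw13_sw13)
      have "\<exists>G. homog e G \<and> F \<circ> sw13 = pmul (lin_form (c,b,a)) G"
      proof (rule core[OF homog_sw13[OF hom] a _ _ _ _])
        show "finite (sw13 ` A)" using fin by simp
        show "Suc e < card (sw13 ` A)" using cardA card_image[OF inj_on_subset[OF inj subset_UNIV], of A] by simp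
        show "\<forall>v\<in>sw13 ` A. v \<noteq> (0,0,0) \<and> dot (c,b,a) v = 0 \<and> eval_form (Suc e) (F \<circ> sw13) v = 0"
        proof
          fix v assume "v \<in> sw13 ` A"
          then obtain u where u: "u \<in> A" "v = sw13 u" by auto
          have "sw13 u \<noteq> (0,0,0)" using hA u by (metis sw13_sw13 sw13_trip)
          moreover have "dot (sw13 l) (sw13 u) = 0" using hA u dot_sw13 by metis
          moreover have "eval_form (Suc e) (F \<circ> sw13) (sw13 u) = 0"
            using eval_sw13[of "Suc e" F u] hA u by simp
          ultimately show "v \<noteq> (0,0,0) \<and> dot (c,b,a) v = 0 \<and> eval_form (Suc e) (F \<circ> sw13) v = 0"
            using u hA eval_sw13 lv by simp
        qed
        show "\<forall>v\<in>sw13 ` A. \<forall>w\<in>sw13 ` A. \<forall>t. w = smul t v \<longrightarrow> w = v"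
        proof (intro ballI allI impI)
          fix v w t assume v: "v \<in> sw13 ` A" and w: "w \<in> sw13 ` A" and ew: "w = smul t v"
          obtain u where u: "u \<in> A" "v = sw13 u" using v by auto
          obtain u' where u': "u' \<in> A" "w = sw13 u'" using w by auto
          have "u' = smul t u" using ew u u' smul_sw13[of t u] by (metis sw13_sw13)
          hence "u' = u" using np u u' by blast
          thus "w = v" using u u' by simp
        qed
      qed
      then obtain G' where G': "homog e G'" "F \<circ> sw13 = pmul (lin_form (c,b,a)) G'" by blast
      have "F = (F \<circ> sw13) \<circ> sw13" by (simp add: comp_def)
      also have "\<dots> = pmul (lin_form (a,b,c)) (G' \<circ> sw13)"
        using G'(2) pmul_sw13[of a b c G'] by simp
      finally show ?thesis using homog_sw13[OF G'(1)] lv by blast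
    qed
  qed
qed



lemma proj_mem: "v \<in> proj_pt v"
  unfolding proj_pt_def by (rule CollectI, rule exI[of _ 1]) simp

lemma proj_eq: "proj_pt v = proj_pt w \<Longrightarrow> \<exists>t. t \<noteq> 0 \<and> w = smul t v"
  using proj_mem[of w] unfolding proj_pt_def smul_def by auto

lemma proj_smul: assumes "t \<noteq> 0" shows "proj_pt (smul t v) = proj_pt v"
proof
  show "proj_pt (smul t v) \<subseteq> proj_pt v"
  proof
    fix x assume "x \<in> proj_pt (smul t v)"
    then obtain c where c: "c \<noteq> 0" "x = (c * (t * fst v), c * (t * fst (snd v)), c * (t * snd (snd v)))"
      unfolding proj_pt_def smul_def by auto
    hence "x = ((c*t) * fst v, (c*t) * fst (snd v), (c*t) * snd (snd v))" by (simp add: mult_ac)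
    moreover have "c * t \<noteq> 0" using c assms by simp
    ultimately show "x \<in> proj_pt v" unfolding proj_pt_def by blast
  qed
  show "proj_pt v \<subseteq> proj_pt (smul t v)"
  proof
    fix x assume "x \<in> proj_pt v"
    then obtain c where c: "c \<noteq> 0" "x = (c * fst v, c * fst (snd v), c * snd (snd v))"
      unfolding proj_pt_def by auto
    hence x: "x = ((c/t) * (t * fst v), (c/t) * (t * fst (snd v)), (c/t) * (t * snd (snd v)))"
      using assms by simp
    have ct: "c / t \<noteq> 0" using c assms by simp
    show "x \<in> proj_pt (smul t v)" unfolding proj_pt_def smul_def
      using x ct by (intro CollectI exI[of _ "c/t"]) simp
  qed
qed

lemma card_ge2: "CARD('a::{finite,field}) \<ge> 2"
proof -
  have "card {0::'a, 1} \<le> CARD('a)" by (rule card_mono) auto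
  thus ?thesis by simp
qed

lemma dot_smul: "dot l (smul t v) = t * dot l v" by (simp add: dot_def smul_def algebra_simps)
lemma dot_smul_l: "dot (smul t l) v = t * dot l v" by (simp add: dot_def smul_def algebra_simps)
lemma smul_zero_iff: "smul t (v::'a::field\<times>'a\<times>'a) = (0,0,0) \<longleftrightarrow> t = 0 \<or> v = (0,0,0)"
  by (auto simp: smul_def prod_eq_iff)
lemma smul_zero_iff': "(0,0,0) = smul t (v::'a::field\<times>'a\<times>'a) \<longleftrightarrow> t = 0 \<or> v = (0,0,0)"
  by (metis smul_zero_iff)

lemma eval_smul: "eval_form d F (smul t v) = t ^ d * eval_form d F v"
  unfolding eval_T sum_distrib_left
proof (rule sum.cong)
  fix m assume "m \<in> T d"
  then obtain i j k where m: "m = (i,j,k)" "i + j + k = d" by (auto simp: T_def)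
  have "t ^ d = t ^ i * t ^ j * t ^ k" using m(2) by (simp add: power_add[symmetric])
  thus "F m * mono m (smul t v) = t ^ d * (F m * mono m v)"
    unfolding m(1) by (simp add: mono_def smul_def power_mult_distrib mult_ac)
qed simp

lemma line_pts_dot: "line_pts l = {proj_pt v | v. v \<noteq> (0,0,0) \<and> dot l v = 0}"
  unfolding line_pts_def dot_def ..

lemma rat_points_alt: "rat_points d F = {proj_pt v | v. v \<noteq> (0,0,0) \<and> eval_form d F v = 0}"
  unfolding rat_points_def ..

lemma mem_line: assumes "p \<noteq> (0,0,0)" shows "proj_pt p \<in> line_pts l \<longleftrightarrow> dot l p = 0"
proof
  assume "proj_pt p \<in> line_pts l"
  then obtain v where v: "proj_pt p = proj_pt v" "v \<noteq> (0,0,0)" "dot l v = 0"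
    unfolding line_pts_dot by auto
  then obtain t where "p = smul t v" using proj_eq[of v p] by auto
  thus "dot l p = 0" using v by (simp add: dot_smul)
next
  assume "dot l p = 0"
  thus "proj_pt p \<in> line_pts l" unfolding line_pts_dot using assms by blast
qed

lemma line_smul: assumes "t \<noteq> 0" shows "line_pts (smul t l) = line_pts l"
  unfolding line_pts_dot dot_smul_l using assms by simp

lemma ker_card3:
  fixes p :: "'a::{finite,field} \<times> 'a \<times> 'a"
  assumes p3: "snd (snd p) \<noteq> 0"
  shows "card {l. dot l p = 0} = CARD('a) ^ 2"
proof -
  obtain p1 p2 p3' where pp: "p = (p1,p2,p3')" by (cases p) auto
  define f where "f = (\<lambda>(u::'a,w::'a). (u, w, - (u * p1 + w * p2) / p3'))"
  have p3': "p3' \<noteq> 0" using p3 pp by simp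
  have r: "{l. dot l p = 0} = range f"
  proof
    show "range f \<subseteq> {l. dot l p = 0}"
      using p3' by (auto simp: f_def dot_def pp field_simps)
    show "{l. dot l p = 0} \<subseteq> range f"
    proof
      fix l assume "l \<in> {l. dot l p = 0}"
      then obtain l1 l2 l3 where l: "l = (l1,l2,l3)" "l1 * p1 + l2 * p2 + l3 * p3' = 0"
        by (cases l) (auto simp: dot_def pp)
      have "l3 = - (l1 * p1 + l2 * p2) / p3'"
        using l(2) p3' by (simp add: eq_divide_eq eq_neg_iff_add_eq_0 algebra_simps)
      hence "l = f (l1, l2)" using l by (simp add: f_def)
      thus "l \<in> range f" by blast
    qed
  qed
  have "inj f" by (auto simp: f_def inj_def)
  hence "card (range f) = CARD('a \<times> 'a)" by (simp add: card_image)
  thus ?thesis using r by (simp add: power2_eq_square)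
qed

lemma ker_card:
  fixes p :: "'a::{finite,field} \<times> 'a \<times> 'a"
  assumes p: "p \<noteq> (0,0,0)"
  shows "card {l. dot l p = 0} = CARD('a) ^ 2"
proof -
  obtain p1 p2 p3 where pp: "p = (p1,p2,p3)" by (cases p) auto
  show ?thesis
  proof (cases "p3 \<noteq> 0")
    case True thus ?thesis using ker_card3[of p] pp by simp
  next
    case False
    show ?thesis
    proof (cases "p2 \<noteq> 0")
      case True
      have e: "{l. dot l p = 0} = sw23 ` {l. dot l (sw23 p) = 0}"
      proof
        show "{l. dot l p = 0} \<subseteq> sw23 ` {l. dot l (sw23 p) = 0}"
        proof
          fix l assume "l \<in> {l. dot l p = 0}"
          hence "sw23 l \<in> {l. dot l (sw23 p) = 0}" by (simp add: dot_sw23)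
          hence "sw23 (sw23 l) \<in> sw23 ` {l. dot l (sw23 p) = 0}" by (rule imageI)
          thus "l \<in> sw23 ` {l. dot l (sw23 p) = 0}" by simp
        qed
        show "sw23 ` {l. dot l (sw23 p) = 0} \<subseteq> {l. dot l p = 0}"
          using dot_sw23[of _ "sw23 p"] by auto
      qed
      have "inj sw23" by (metis injI sw23_sw23)
      hence "card {l. dot l p = 0} = card {l. dot l (sw23 p) = 0}"
        unfolding e by (simp add: card_image inj_on_def)
      also have "\<dots> = CARD('a) ^ 2" by (rule ker_card3) (use True pp in simp)
      finally show ?thesis .
    next
      case c2: False
      hence p1: "p1 \<noteq> 0" using p pp False by auto
      have e: "{l. dot l p = 0} = sw13 ` {l. dot l (sw13 p) = 0}"
      proof
        show "{l. dot l p = 0} \<subseteq> sw13 ` {l. dot l (sw13 p) = 0}"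
        proof
          fix l assume "l \<in> {l. dot l p = 0}"
          hence "sw13 l \<in> {l. dot l (sw13 p) = 0}" by (simp add: dot_sw13)
          hence "sw13 (sw13 l) \<in> sw13 ` {l. dot l (sw13 p) = 0}" by (rule imageI)
          thus "l \<in> sw13 ` {l. dot l (sw13 p) = 0}" by simp
        qed
        show "sw13 ` {l. dot l (sw13 p) = 0} \<subseteq> {l. dot l p = 0}"
          using dot_sw13[of _ "sw13 p"] by auto
      qed
      have "inj sw13" by (metis injI sw13_sw13)
      hence "card {l. dot l p = 0} = card {l. dot l (sw13 p) = 0}"
        unfolding e by (simp add: card_image inj_on_def)
      also have "\<dots> = CARD('a) ^ 2" by (rule ker_card3) (use p1 pp in simp)
      finally show ?thesis .
    qed
  qed
qed

lemma lines_bound: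
  fixes p :: "'a::{finite,field} \<times> 'a \<times> 'a"
  assumes p: "p \<noteq> (0,0,0)"
  shows "card (line_pts ` {l. l \<noteq> (0,0,0) \<and> dot l p = 0}) \<le> CARD('a) + 1"
proof -
  define q where "q = CARD('a)"
  have q2: "q \<ge> 2" unfolding q_def by (rule card_ge2)
  define N where "N = {l. l \<noteq> (0,0,0) \<and> dot l p = 0}"
  have "N = {l. dot l p = 0} - {(0,0,0)}" by (auto simp: N_def)
  hence cN: "card N = q^2 - 1" using ker_card[OF p] by (simp add: q_def dot_def)
  define Ls where "Ls = line_pts ` N"
  have "card N = (\<Sum>L\<in>Ls. card {l\<in>N. line_pts l = L})"
    unfolding Ls_def card_eq_sum by (rule sum.image_gen) simp
  moreover have "q - 1 \<le> card {l\<in>N. line_pts l = L}" if L: "L \<in> Ls" for L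
  proof -
    obtain l0 where l0: "l0 \<in> N" "L = line_pts l0" using L by (auto simp: Ls_def)
    have l0nz: "l0 \<noteq> (0,0,0)" using l0 by (simp add: N_def)
    have sub: "(\<lambda>t. smul t l0) ` (UNIV - {0}) \<subseteq> {l\<in>N. line_pts l = L}"
      using l0 by (auto simp: N_def smul_zero_iff smul_zero_iff' dot_smul_l line_smul)
    have inj: "inj_on (\<lambda>t. smul t l0) (UNIV - {0})"
    proof (rule inj_onI)
      fix t t' assume "smul t l0 = smul t' l0"
      thus "t = t'" using l0nz by (cases l0) (auto simp: smul_def)
    qed
    have "q - 1 = card (UNIV - {0::'a})" by (simp add: q_def card_Diff_subset)
    also have "\<dots> = card ((\<lambda>t. smul t l0) ` (UNIV - {0}))" using inj by (simp add: card_image)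
    also have "\<dots> \<le> card {l\<in>N. line_pts l = L}" by (rule card_mono[OF _ sub]) simp
    finally show ?thesis .
  qed
  hence "card Ls * (q - 1) \<le> (\<Sum>L\<in>Ls. card {l\<in>N. line_pts l = L})"
    using sum_bounded_below[of Ls "q - 1"] by (simp add: mult.commute)
  moreover have "q^2 - 1 = (q + 1) * (q - 1)"
  proof -
    obtain n where "q = n + 2" using q2 by (metis add.commute le_Suc_ex)
    thus ?thesis by (simp add: power2_eq_square algebra_simps)
  qed
  ultimately have "card Ls * (q - 1) \<le> (q + 1) * (q - 1)"
    using cN by simp
  hence "card Ls \<le> q + 1" using q2 by (simp only: mult_le_cancel2)
  thus ?thesis by (simp add: Ls_def N_def q_def)
qed

lemma common_line:
  fixes p w :: "'a::{finite,field} \<times> 'a \<times> 'a"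
  shows "\<exists>l. l \<noteq> (0,0,0) \<and> dot l p = 0 \<and> dot l w = 0"
proof -
  define f where "f = (\<lambda>l::'a\<times>'a\<times>'a. (dot l p, dot l w))"
  have q2: "CARD('a) \<ge> 2" by (rule card_ge2)
  have "\<not> inj f"
  proof
    assume "inj f"
    hence "CARD('a\<times>'a\<times>'a) \<le> CARD('a\<times>'a)"
      by (intro card_inj_on_le[of f UNIV UNIV]) auto
    hence "CARD('a) * (CARD('a) * CARD('a)) \<le> CARD('a) * CARD('a)" by simp
    moreover have "CARD('a) * CARD('a) > 0" using q2 by simp
    moreover have "1 * (CARD('a) * CARD('a)) < CARD('a) * (CARD('a) * CARD('a))"
      by (rule mult_strict_right_mono) (use q2 in auto)
    ultimately show False by simp
  qed
  then obtain l1 l2 where ne: "l1 \<noteq> l2" and eq: "f l1 = f l2" unfolding inj_def by blast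
  define l where "l = (fst l1 - fst l2, fst (snd l1) - fst (snd l2), snd (snd l1) - snd (snd l2))"
  have "l \<noteq> (0,0,0)" using ne by (auto simp: l_def prod_eq_iff)
  moreover have "dot l p = 0" "dot l w = 0" using eq by (auto simp: f_def l_def dot_def algebra_simps)
  ultimately show ?thesis by blast
qed



theorem lemma3p2:
  fixes F :: "('a::{finite,field}) form3"
  assumes "CARD('a) \<ge> 5"
    and "plane_curve (CARD('a) - 1) F"
    and "\<not> has_linear_component (CARD('a) - 1) F"
    and "card (rat_points (CARD('a) - 1) F) = (CARD('a) - 1)^2"
  shows "is_arc ((CARD('a) - 1)^2) (CARD('a) - 1) (rat_points (CARD('a) - 1) F)"
proof -
  define q where "q = CARD('a)"
  define S where "S = rat_points (q - 1) F"
  have q5: "q \<ge> 5" using assms(1) by (simp add: q_def)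
  obtain e where e: "q - 1 = Suc e" using q5 by (intro that[of "q - 2"]) simp
  have hom: "homog (Suc e) F" using assms(2) e by (simp add: plane_curve_def q_def)
  have nlc: "\<not> has_linear_component (Suc e) F" using assms(3) e by (simp add: q_def)
  have cardS: "card S = (q - 1)^2" using assms(4) by (simp add: S_def q_def)
  have Sdef: "S = {proj_pt v | v. v \<noteq> (0,0,0) \<and> eval_form (Suc e) F v = 0}"
    unfolding S_def e rat_points_alt ..
  have le: "\<forall>L\<in>lines_P2. card (L \<inter> S) \<le> q - 1"
  proof
    fix L :: "('a \<times> 'a \<times> 'a) set set" assume "L \<in> lines_P2"
    then obtain l where l: "l \<noteq> (0,0,0)" "L = line_pts l" by (auto simp: lines_P2_def)
    show "card (L \<inter> S) \<le> q - 1"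
    proof (rule ccontr)
      assume "\<not> card (L \<inter> S) \<le> q - 1"
      hence big: "Suc e < card (L \<inter> S)" using e by simp
      define pr where "pr = (\<lambda>P v. P = proj_pt v \<and> v \<noteq> (0,0,0) \<and> dot l v = 0 \<and> eval_form (Suc e) F v = 0)"
      have ex: "\<exists>v. pr P v" if P: "P \<in> L \<inter> S" for P
      proof -
        obtain v1 where v1: "P = proj_pt v1" "v1 \<noteq> (0,0,0)" "dot l v1 = 0"
          using P l unfolding line_pts_dot by auto
        obtain v2 where v2: "P = proj_pt v2" "v2 \<noteq> (0,0,0)" "eval_form (Suc e) F v2 = 0"
          using P unfolding Sdef by auto
        obtain t where "v2 = smul t v1" using proj_eq[of v1 v2] v1 v2 by auto
        hence "dot l v2 = 0" using v1 by (simp add: dot_smul)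
        thus ?thesis using v2 unfolding pr_def by blast
      qed
      define rep where "rep = (\<lambda>P. SOME v. pr P v)"
      have rep: "pr P (rep P)" if "P \<in> L \<inter> S" for P
        unfolding rep_def using ex[OF that] by (rule someI_ex)
      have inj: "inj_on rep (L \<inter> S)"
      proof (rule inj_onI)
        fix P P' assume "P \<in> L \<inter> S" "P' \<in> L \<inter> S" "rep P = rep P'"
        thus "P = P'" using rep[of P] rep[of P'] unfolding pr_def by simp
      qed
      define A where "A = rep ` (L \<inter> S)"
      have cA: "Suc e < card A" using big inj by (simp add: A_def card_image)
      have hA: "\<forall>v\<in>A. v \<noteq> (0,0,0) \<and> dot l v = 0 \<and> eval_form (Suc e) F v = 0"
        using rep unfolding A_def pr_def by auto
      have np: "\<forall>v\<in>A. \<forall>w\<in>A. \<forall>t. w = smul t v \<longrightarrow> w = v"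
      proof (intro ballI allI impI)
        fix v w t assume v: "v \<in> A" and w: "w \<in> A" and wt: "w = smul t v"
        obtain P where P: "P \<in> L \<inter> S" "v = rep P" using v by (auto simp: A_def)
        obtain P' where P': "P' \<in> L \<inter> S" "w = rep P'" using w by (auto simp: A_def)
        have "w \<noteq> (0,0,0)" using hA w by auto
        hence "t \<noteq> 0" using wt smul_zero_iff by metis
        hence "proj_pt w = proj_pt v" using wt proj_smul by metis
        moreover have "P = proj_pt v" "P' = proj_pt w" using rep[OF P(1)] rep[OF P'(1)] P P' unfolding pr_def by auto
        ultimately have "P' = P" by simp
        thus "w = v" using P P' by simp
      qed
      obtain G where "homog e G" "F = pmul (lin_form l) G"
        using gen[OF hom l(1) _ cA hA np] by auto
      hence "has_linear_component (Suc e) F" unfolding has_linear_component_def using l(1)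
        by (intro exI[of _ l] exI[of _ G]) simp
      thus False using nlc by simp
    qed
  qed
  have ex: "\<exists>L\<in>lines_P2. card (L \<inter> S) = q - 1"
  proof (rule ccontr)
    assume "\<not> ?thesis"
    hence small: "\<forall>L\<in>lines_P2. card (L \<inter> S) \<le> q - 2" using le by fastforce
    have "S \<noteq> {}" using cardS q5 by (auto simp: card_eq_0_iff)
    then obtain P where P: "P \<in> S" by auto
    then obtain p where p: "P = proj_pt p" "p \<noteq> (0,0,0)" unfolding Sdef by auto
    define Lp where "Lp = line_pts ` {l. l \<noteq> (0,0,0) \<and> dot l p = 0}"
    have cLp: "card Lp \<le> q + 1" unfolding Lp_def q_def by (rule lines_bound[OF p(2)])
    have each: "card (L \<inter> S - {P}) \<le> q - 3" if L: "L \<in> Lp" for L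
    proof -
      obtain l where l: "l \<noteq> (0,0,0)" "dot l p = 0" "L = line_pts l" using L by (auto simp: Lp_def)
      have "L \<in> lines_P2" unfolding lines_P2_def using l by blast
      hence "card (L \<inter> S) \<le> q - 2" using small by blast
      moreover have "P \<in> L \<inter> S" using mem_line[OF p(2), of l] l p P by simp
      ultimately show ?thesis by (simp add: card_Diff_singleton)
    qed
    have cover: "S - {P} \<subseteq> (\<Union>L\<in>Lp. L \<inter> S - {P})"
    proof
      fix Q assume Q: "Q \<in> S - {P}"
      then obtain w where w: "Q = proj_pt w" "w \<noteq> (0,0,0)" unfolding Sdef by auto
      obtain l where l: "l \<noteq> (0,0,0)" "dot l p = 0" "dot l w = 0" using common_line[of p w] by auto
      have "line_pts l \<in> Lp" using l by (auto simp: Lp_def)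
      moreover have "Q \<in> line_pts l" using mem_line[OF w(2), of l] w l by simp
      ultimately show "Q \<in> (\<Union>L\<in>Lp. L \<inter> S - {P})" using Q by blast
    qed
    have "card (S - {P}) \<le> card (\<Union>L\<in>Lp. L \<inter> S - {P})" by (rule card_mono[OF _ cover]) simp
    also have "\<dots> \<le> (\<Sum>L\<in>Lp. card (L \<inter> S - {P}))" by (rule card_UN_le) simp
    also have "\<dots> \<le> card Lp * (q - 3)" using sum_bounded_above[of Lp _ "q - 3"] each by simp
    also have "\<dots> \<le> (q + 1) * (q - 3)" using cLp by (rule mult_right_mono) simp
    finally have ineq: "card (S - {P}) \<le> (q + 1) * (q - 3)" .
    have "card (S - {P}) = (q - 1)^2 - 1" using P cardS by (simp add: card_Diff_singleton)
    with ineq have "(q - 1)^2 - 1 \<le> (q + 1) * (q - 3)" by simp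
    moreover obtain n where "q = n + 5" using q5 by (metis add.commute le_Suc_ex)
    ultimately show False by (simp add: power2_eq_square algebra_simps)
  qed
  have sub: "S \<subseteq> P2" unfolding Sdef P2_def by auto
  show ?thesis
    unfolding is_arc_def S_def[symmetric] q_def[symmetric]
    using sub cardS le ex by simp
qed

end
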